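(* Let $3\leq m\leq n$, $\ell=m-1$, and $\mathfrak{B}=\mathbb{R}^{n\times n\times\ell}\setminus(\mathfrak{A}\cup\mathfrak{C})$. Then $\mathfrak{B}$ is contained in the boundary of $\mathfrak{C}$ (i.e. $\mathfrak{B}\subset\overline{\mathfrak{C}}$). In particular $\mathbb{R}^{n\times n\times\ell}$ is the disjoint union of $\mathfrak{A}$ and the Euclidean closure $\overline{\mathfrak{C}}$.
   Context: For $Y=(Y_1;\ldots;Y_\ell)\in\mathbb{R}^{n\times n\times\ell}$ and $\mathbf{a}=(a_1,\ldots,a_\ell,a_m)^\top\in\mathbb{R}^m$, $M(\mathbf{a},Y)=\sum_{k=1}^\ell a_kY_k-a_mE_n$. $\mathfrak{A}=\{Y\mid\det M(\mathbf{a},Y)>0\text{ for all }\mathbf{a}\neq\mathbf{0}\}$ and $\mathfrak{C}=\{Y\mid \det M(\mathbf{a},Y)<0\text{ for some }\mathbf{a}\in\mathbb{R}^m\}$; both are open. *)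

theory Defs
  imports "HOL-Analysis.Analysis"
begin

text \<open>A tensor Y in R^(n x n x l) is a family (Y_1,...,Y_l) of n x n real matrices,
  indexed by the finite type 'l (l = CARD('l)); n = CARD('n).
  A vector a = (a_1,...,a_l,a_m) in R^m (m = l+1) is represented as the pair (c, t)
  with c = (a_1,...,a_l) and t = a_m.\<close>

definition Mmat :: "real^'l \<Rightarrow> real \<Rightarrow> (real^'n^'n)^'l \<Rightarrow> real^'n^'n" where
  "Mmat c t Y = (\<Sum>k\<in>UNIV. c $ k *\<^sub>R Y $ k) - t *\<^sub>R mat 1"

definition setA :: "((real^'n^'n)^'l) set" where
  "setA = {Y. \<forall>c t. (c, t) \<noteq> (0, 0) \<longrightarrow> det (Mmat c t Y) > 0}"

definition setC :: "((real^'n^'n)^'l) set" where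
  "setC = {Y. \<exists>c t. det (Mmat c t Y) < 0}"

end

theory Submission
  imports Defs "HOL-Computational_Algebra.Polynomial"
begin


lemma det_scaleR_real: "det (r *\<^sub>R (A::real^'n^'n)) = r ^ CARD('n) * det A"
proof -
  have "det (r *\<^sub>R A) = (\<Sum>p\<in>{p. p permutes (UNIV::'n set)}. r ^ CARD('n) * (of_int (sign p) * (\<Prod>i\<in>UNIV. A$i$p i)))"
    unfolding det_def by (intro sum.cong refl) (simp add: prod.distrib)
  also have "\<dots> = r ^ CARD('n) * det A" unfolding det_def by (simp add: sum_distrib_left)
  finally show ?thesis .
qed

lemma continuous_on_det[continuous_intros]:
  fixes f :: "'a::topological_space \<Rightarrow> real^'n^'n"
  assumes "continuous_on S f"
  shows "continuous_on S (\<lambda>x. det (f x))"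
  unfolding det_def by (intro continuous_intros assms)

lemma matrix_add_rdistrib': "((A::real^'n^'m) + B) ** C = A ** C + B ** C"
  by (vector matrix_matrix_mult_def sum.distrib[symmetric] field_simps)

lemma exists_nonroot:
  fixes S :: "real^'n^'n"
  assumes "e > 0"
  shows "\<exists>\<epsilon>. 0 < \<epsilon> \<and> \<epsilon> < e \<and> det (S + \<epsilon> *\<^sub>R mat 1) \<noteq> 0"
proof -
  define P where "P = (\<Sum>p\<in>{p. p permutes (UNIV::'n set)}. smult (of_int (sign p))
       (\<Prod>i\<in>UNIV. [:S$i$p i, if i = p i then 1 else 0:]))"
  have P: "poly P x = det (S + x *\<^sub>R mat 1)" for x
    unfolding P_def det_def poly_sum poly_prod
    by (intro sum.cong refl) (simp add: mat_def poly_prod)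
  have "((\<lambda>u. det (mat 1 + u *\<^sub>R S)) \<longlongrightarrow> det (mat 1 + 0 *\<^sub>R S)) (at_right 0)"
  proof -
    have "continuous_on UNIV (\<lambda>u::real. det (mat 1 + u *\<^sub>R S))"
      by (intro continuous_intros)
    then show ?thesis
      by (meson UNIV_I at_within_open continuous_on_def filterlim_at_split open_UNIV)
  qed
  then have "((\<lambda>u. det (mat 1 + u *\<^sub>R S)) \<longlongrightarrow> 1) (at_right 0)" by simp
  then have "\<forall>\<^sub>F u in at_right (0::real). det (mat 1 + u *\<^sub>R S) > 0"
    by (rule order_tendstoD) simp
  moreover have "\<forall>\<^sub>F u in at_right (0::real). u > 0" by (simp add: eventually_at_right_less)
  ultimately obtain u::real where u: "u > 0" "det (mat 1 + u *\<^sub>R S) > 0"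
    by (metis (mono_tags, lifting) eventually_happens' eventually_conj_iff trivial_limit_at_right_real)
  have "S + (1/u) *\<^sub>R mat 1 = (1/u) *\<^sub>R (mat 1 + u *\<^sub>R S)"
    using u by (simp add: algebra_simps)
  then have "det (S + (1/u) *\<^sub>R mat 1) \<noteq> 0"
    using u by (simp add: det_scaleR_real)
  then have "P \<noteq> 0" using P by (metis poly_0)
  then have fin: "finite {x. poly P x = 0}" by (rule poly_roots_finite)
  have "infinite {0<..<e}" using assms by (simp add: infinite_Ioo)
  then obtain x where "x \<in> {0<..<e}" "x \<notin> {x. poly P x = 0}"
    using fin by (metis infinite_super subsetI)
  then show ?thesis using P by auto
qed

lemma singular_closure:
  fixes S :: "real^'n^'n"
  assumes "det S = 0"
  shows "S \<in> closure {N. det N < 0}"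
proof -
  obtain v where v: "v \<noteq> 0" "S *v v = 0"
    using assms det_eq_0_rank matrix_nonfull_linear_equations_eq by fastforce
  obtain k where k: "v $ k \<noteq> 0" using v(1) by (metis vec_eq_iff zero_index)
  define B :: "real^'n^'n" where "B = (\<chi> i j. if j = k then v$i else mat 1 $i$j)"
  have dB: "det B = v $ k"
    using cramer_lemma[where A="mat 1 :: real^'n^'n" and k=k and x=v] unfolding B_def matrix_vector_mul_lid by simp
  have "invertible B" using k dB invertible_det_nz[of B] by simp
  then obtain B' where B': "B ** B' = mat 1" "B' ** B = mat 1"
    unfolding invertible_def by blast
  define E :: "real^'n^'n" where "E = (\<chi> i j. if i = j then (if i = k then -1 else 1) else 0)"
  have dE: "det E = -1"
  proof -
    have "det E = (\<Prod>i\<in>UNIV. E$i$i)" by (rule det_diagonal) (simp add: E_def)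
    also have "\<dots> = (\<Prod>i\<in>UNIV. if i = k then -1 else 1)" by (simp add: E_def)
    also have "\<dots> = -1" by (simp add: prod.If_cases)
    finally show ?thesis .
  qed
  have SBk: "(S ** B) $ i $ k = 0" for i
  proof -
    have "(S ** B) $ i $ k = (S *v v) $ i"
      by (simp add: matrix_matrix_mult_def matrix_vector_mult_def B_def)
    then show ?thesis using v by simp
  qed
  have SBE: "(S ** B) ** E = S ** B"
  proof -
    have "((S ** B) ** E) $ i $ j = (S ** B) $ i $ j" for i j
    proof -
      have "((S ** B) ** E) $ i $ j = (\<Sum>l\<in>UNIV. (S ** B) $ i $ l * E $ l $ j)"
        by (simp add: matrix_matrix_mult_def)
      also have "\<dots> = (\<Sum>l\<in>UNIV. if l = j then (S ** B) $ i $ j * (if j = k then -1 else 1) else 0)"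
        by (intro sum.cong refl) (auto simp: E_def)
      also have "\<dots> = (S ** B) $ i $ j * (if j = k then -1 else 1)"
        by (rule trans[OF sum.delta]) simp_all
      also have "\<dots> = (S ** B) $ i $ j" using SBk by auto
      finally show ?thesis .
    qed
    then show ?thesis by (simp add: vec_eq_iff)
  qed
  define K where "K = B ** E ** B'"
  have dK: "det K = -1"
  proof -
    have "det B * det B' = 1" using B'(1) by (metis det_I det_mul)
    then show ?thesis unfolding K_def det_mul dE by (simp add: algebra_simps)
  qed
  have SK: "S ** K = S"
  proof -
    have "S ** K = ((S ** B) ** E) ** B'" unfolding K_def by (simp add: matrix_mul_assoc)
    also have "\<dots> = S ** (B ** B')" by (simp add: SBE matrix_mul_assoc)
    finally show ?thesis using B'(1) by simp
  qed
  have eqK: "(S + \<epsilon> *\<^sub>R mat 1) ** K = S + \<epsilon> *\<^sub>R K" for \<epsilon>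
    by (simp add: matrix_add_rdistrib' SK scalar_matrix_assoc[symmetric])
  have dK2: "det (S + \<epsilon> *\<^sub>R K) = - det (S + \<epsilon> *\<^sub>R mat 1)" for \<epsilon>
  proof -
    have "det (S + \<epsilon> *\<^sub>R K) = det (S + \<epsilon> *\<^sub>R mat 1) * det K"
      unfolding eqK[of \<epsilon>, symmetric] by (rule det_mul)
    then show ?thesis using dK by simp
  qed
  show ?thesis
    unfolding closure_approachable
  proof (intro allI impI)
    fix e :: real assume e: "e > 0"
    define C0 where "C0 = norm (mat 1 :: real^'n^'n) + norm K + 1"
    have C0: "C0 > 0" unfolding C0_def by (smt (verit) norm_ge_zero)
    obtain \<epsilon> where eps: "0 < \<epsilon>" "\<epsilon> < e / C0" "det (S + \<epsilon> *\<^sub>R mat 1) \<noteq> 0"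
      using exists_nonroot[of "e / C0" S] e C0 by auto
    have eC: "\<epsilon> * C0 < e" using eps C0 by (simp add: pos_less_divide_eq)
    have d1: "dist (S + \<epsilon> *\<^sub>R mat 1) S < e"
    proof -
      have "dist (S + \<epsilon> *\<^sub>R mat 1) S = \<epsilon> * norm (mat 1 :: real^'n^'n)"
        using eps by (simp add: dist_norm)
      also have "\<dots> \<le> \<epsilon> * C0" using eps unfolding C0_def
        by (intro mult_left_mono) auto
      finally show ?thesis using eC by simp
    qed
    have d2: "dist (S + \<epsilon> *\<^sub>R K) S < e"
    proof -
      have "dist (S + \<epsilon> *\<^sub>R K) S = \<epsilon> * norm K"
        using eps by (simp add: dist_norm)
      also have "\<dots> \<le> \<epsilon> * C0" using eps unfolding C0_def
        by (intro mult_left_mono) auto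
      finally show ?thesis using eC by simp
    qed
    show "\<exists>y\<in>{N. det N < 0}. dist y S < e"
    proof (cases "det (S + \<epsilon> *\<^sub>R mat 1) < 0")
      case True then show ?thesis using d1 by auto
    next
      case False
      then have "det (S + \<epsilon> *\<^sub>R K) < 0" using dK2[of \<epsilon>] eps(3) by linarith
      then show ?thesis using d2 by blast
    qed
  qed
qed



lemma Mmat_scale: "Mmat (r *\<^sub>R c) (r * t) Y = r *\<^sub>R Mmat c t Y"
  unfolding Mmat_def by (simp add: scaleR_sum_right algebra_simps)

lemma det_Mmat00: "det (Mmat 0 0 (Y::(real^'n^'n)^'l)) = 0"
proof -
  have "Mmat 0 0 Y = (0::real^'n^'n)" unfolding Mmat_def by simp
  then show ?thesis by (metis det_0 mat_0)
qed

lemma continuous_Mmat[continuous_intros]: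
  assumes "continuous_on S f" "continuous_on S g" "continuous_on S h"
  shows "continuous_on S (\<lambda>x. Mmat (f x) (g x) (h x))"
  unfolding Mmat_def by (intro continuous_intros assms)

lemma AC_disjoint: "setA \<inter> setC = {}"
proof -
  have False if "Y \<in> setA" "Y \<in> setC" for Y :: "(real^'n^'n)^'l"
  proof -
    from that(2) obtain c t where ct: "det (Mmat c t Y) < 0" unfolding setC_def by auto
    then have "(c, t) \<noteq> (0, 0)" using det_Mmat00[of Y] by auto
    then have "det (Mmat c t Y) > 0" using that(1) unfolding setA_def by blast
    then show False using ct by simp
  qed
  then show ?thesis by blast
qed

lemma A_closureC: "setA \<inter> closure (setC :: ((real^'n^'n)^'l) set) = {}"
proof -
  define T :: "(((real^'l) \<times> real) \<times> ((real^'n^'n)^'l)) set"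
    where "T = {p. det (Mmat (fst (fst p)) (snd (fst p)) (snd p)) \<le> 0}"
  define P where "P = {Y. \<exists>a. a \<in> sphere (0::(real^'l) \<times> real) 1 \<and> (a, Y) \<in> T}"
  have "closed T" unfolding T_def
    by (intro closed_Collect_le continuous_intros)
  then have cP: "closed P" unfolding P_def
    by (intro closed_compact_projection) auto
  have CP: "setC \<subseteq> P"
  proof
    fix Y assume "Y \<in> (setC :: ((real^'n^'n)^'l) set)"
    then obtain c t where ct: "det (Mmat c t Y) < 0" unfolding setC_def by auto
    then have nz: "(c, t) \<noteq> 0" using det_Mmat00[of Y] by (auto simp: zero_prod_def)
    define r where "r = 1 / norm (c, t)"
    have r: "r > 0" using nz by (simp add: r_def)
    define a where "a = r *\<^sub>R (c, t)"
    have "norm a = \<bar>r\<bar> * norm (c, t)" unfolding a_def by (rule norm_scaleR)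
    then have "norm a = 1" using nz r by (simp add: r_def)
    moreover have "det (Mmat (fst a) (snd a) Y) = r ^ CARD('n) * det (Mmat c t Y)"
      by (simp add: a_def Mmat_scale det_scaleR_real)
    then have "det (Mmat (fst a) (snd a) Y) \<le> 0"
      using r ct by (simp add: mult_pos_neg less_imp_le)
    ultimately have "a \<in> sphere 0 1 \<and> (a, Y) \<in> T" unfolding T_def by simp
    then show "Y \<in> P" unfolding P_def by blast
  qed
  have AP: "setA \<inter> P = {}"
  proof -
    have False if "Y \<in> setA" "Y \<in> P" for Y
    proof -
      from that(2) obtain a where a: "norm a = 1" "det (Mmat (fst a) (snd a) Y) \<le> 0"
        unfolding P_def T_def by auto
      have "(fst a, snd a) \<noteq> (0, 0)" using a(1) by (metis norm_zero prod.collapse zero_neq_one zero_prod_def)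
      then have "det (Mmat (fst a) (snd a) Y) > 0" using that(1) unfolding setA_def by blast
      then show False using a(2) by simp
    qed
    then show ?thesis by blast
  qed
  have "closure setC \<subseteq> P" using CP cP by (rule closure_minimal)
  then show ?thesis using AP by blast
qed

lemma B_closureC:
  assumes "Y \<notin> setA" "Y \<notin> setC"
  shows "Y \<in> closure (setC :: ((real^'n^'n)^'l) set)"
proof -
  from assms(1) obtain c t where ct: "(c, t) \<noteq> (0, 0)" "\<not> det (Mmat c t Y) > 0"
    unfolding setA_def by auto
  from assms(2) have "det (Mmat c t Y) \<ge> 0" unfolding setC_def by (auto simp: not_less)
  with ct have d0: "det (Mmat c t Y) = 0" by simp
  have c0: "c \<noteq> 0"
  proof
    assume c: "c = 0"
    then have t: "t \<noteq> 0" using ct by simp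
    have "Mmat c t Y = (-t) *\<^sub>R mat 1" unfolding Mmat_def c by simp
    moreover have "det ((-t) *\<^sub>R (mat 1 :: real^'n^'n)) = (-t) ^ CARD('n)"
      using det_scaleR_real[of "-t" "mat 1 :: real^'n^'n"] by simp
    ultimately have "det (Mmat c t Y) = (-t) ^ CARD('n)" by simp
    then show False using d0 t by simp
  qed
  have cc: "c \<bullet> c \<noteq> 0" using c0 by simp
  define S where "S = Mmat c t Y"
  define \<phi> where "\<phi> = (\<lambda>N. (\<chi> k. Y$k + (c$k / (c \<bullet> c)) *\<^sub>R (N - S)) :: (real^'n^'n)^'l)"
  have Mphi: "Mmat c t (\<phi> N) = N" for N
  proof -
    have "Mmat c t (\<phi> N) = (\<Sum>k\<in>UNIV. c $ k *\<^sub>R Y $ k) + (\<Sum>k\<in>UNIV. (c$k * c$k / (c \<bullet> c)) *\<^sub>R (N - S)) - t *\<^sub>R mat 1"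
      unfolding Mmat_def \<phi>_def by (simp add: scaleR_add_right sum.distrib)
    also have "(\<Sum>k\<in>UNIV. (c$k * c$k / (c \<bullet> c)) *\<^sub>R (N - S)) = ((\<Sum>k\<in>UNIV. c$k * c$k) / (c \<bullet> c)) *\<^sub>R (N - S)"
      by (simp add: scaleR_sum_left sum_divide_distrib)
    also have "(\<Sum>k\<in>UNIV. c$k * c$k) = c \<bullet> c" by (simp add: inner_vec_def)
    finally show ?thesis using cc unfolding S_def Mmat_def by simp
  qed
  have phiS: "\<phi> S = Y" unfolding \<phi>_def by (simp add: vec_eq_iff)
  have S: "S \<in> closure {N. det N < 0}" using d0 unfolding S_def by (rule singular_closure)
  have "\<phi> ` {N. det N < 0} \<subseteq> setC"
  proof
    fix Z assume "Z \<in> \<phi> ` {N. det N < 0}"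
    then obtain N where "det N < 0" "Z = \<phi> N" by blast
    then have "det (Mmat c t Z) < 0" using Mphi by simp
    then show "Z \<in> setC" unfolding setC_def by blast
  qed
  also have "\<dots> \<subseteq> closure setC" by (rule closure_subset)
  finally have sub: "\<phi> ` {N. det N < 0} \<subseteq> closure setC" .
  have "\<phi> ` closure {N. det N < 0} \<subseteq> closure setC"
  proof (rule image_closure_subset)
    have "continuous_on UNIV \<phi>" unfolding \<phi>_def by (intro continuous_intros)
    then show "continuous_on (closure {N. det N < 0}) \<phi>" by (rule continuous_on_subset) simp
  qed (simp_all add: sub)
  then show ?thesis using S phiS by blast
qed

theorem mainTheorem10:
  assumes "3 \<le> CARD('l) + 1" and "CARD('l) + 1 \<le> CARD('n)"
  shows "UNIV - (setA \<union> setC) \<subseteq> frontier (setC :: ((real^'n^'n)^'l) set)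
    \<and> setA \<inter> closure (setC :: ((real^'n^'n)^'l) set) = {}
    \<and> setA \<union> closure (setC :: ((real^'n^'n)^'l) set) = UNIV"
proof (intro conjI)
  show 1: "UNIV - (setA \<union> setC) \<subseteq> frontier (setC :: ((real^'n^'n)^'l) set)"
    unfolding frontier_def using B_closureC interior_subset by blast
  show "setA \<inter> closure (setC :: ((real^'n^'n)^'l) set) = {}" by (rule A_closureC)
  show "setA \<union> closure (setC :: ((real^'n^'n)^'l) set) = UNIV"
    using B_closureC closure_subset by blast
qed


end
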